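(* Let $(X,\sim)$, $U$ and $\tau$ satisfy (C1), (C1'), (C2), and let $\mathcal M(U,\tau)=(X,(U_x)_{x\in X})$ be as constructed below. Then $\mathcal M(U,\tau)$ always satisfies (LM0), (LM1), (LM1'), and the following are equivalent: (i) $\mathcal M(U,\tau)$ is a local Moufang set; (ii) $h_x^{-1}Uh_x=U$ for all units $x\in X$; (iii) $U^\tau=U^{\mu_x}$ for all units $x\in X$.
   Context: Group actions are right actions; $g^h=h^{-1}gh$; permutations are composed left to right. For a set $X$ with equivalence relation $\sim$, $\overline x$ is the class of $x$, $\overline X$ the set of classes, $\mathrm{Sym}(X,\sim)$ the group of bijections $g$ with $x\sim y\iff xg\sim yg$, and for $U\le\mathrm{Sym}(X,\sim)$, $\overline U$ is the induced permutation group of $\overline X$. A local Moufang set is $(X,\sim)$ with $|\overline X|>2$ and subgroups $U_x\le\mathrm{Sym}(X,\sim)$ ($x\in X$) with: (LM0) $x\sim y\Rightarrow\overline{U_x}=\overline{U_y}$; (LM1) $U_x$ fixes $x$ and is sharply transitive on $X\setminus\overline x$; (LM1') $\overline{U_x}$ fixes $\overline x$ and is sharply transitive on $\overline X\setminus\{\overline x\}$; (LM2) $U_x^g=U_{xg}$ for all $x$ and all $g\in\langle U_y\mid y\in X\rangle$. Construction data: a set with equivalence relation $(X,\sim)$ with $|\overline X|>2$, a subgroup $U\le\mathrm{Sym}(X,\sim)$ and $\tau\in\mathrm{Sym}(X,\sim)$ such that (C1) $U$ fixes a point, called $\infty$, and acts sharply transitively on $X\setminus\overline\infty$; (C1') $\overline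 U$ acts sharply transitively on $\overline X\setminus\{\overline\infty\}$; (C2) $\infty\tau\not\sim\infty$ and $\infty\tau^2=\infty$; put $0:=\infty\tau$. For $x\not\sim\infty$ let $\alpha_x$ be the unique element of $U$ with $0\alpha_x=x$, $-x:=0\alpha_x^{-1}$, and $\gamma_x:=\alpha_x^\tau$. Define $U_\infty:=U$, $U_0:=U^\tau$, $U_x:=U_0^{\alpha_x}$ for $x\not\sim\infty$ and $U_x:=U_\infty^{\gamma_{x\tau^{-1}}}$ for $x\sim\infty$; this is $\mathcal M(U,\tau)$. A unit is $x$ with $x\not\sim0$, $x\not\sim\infty$. For a unit $x$: $\mu_x:=\gamma_{(-x)\tau^{-1}}\,\alpha_x\,\gamma_{-(x\tau^{-1})}$ and $h_x:=\tau\,\alpha_x\,\tau^{-1}\,\alpha_{-(x\tau^{-1})}\,\tau\,\alpha_{-\left((-(x\tau^{-1}))\tau\right)}$. *)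

theory Defs
  imports Main
begin

text \<open>The set X is the universe of the type 'a; the equivalence relation
is R. Permutations are functions 'a => 'a acting on the right: the image of x under g
is written g x. Products are left to right: the product g h (first g, then h) is the
function h o g. Conjugation g^h = h^-1 g h is h o g o inv h.\<close>

definition conj :: "('a \<Rightarrow> 'a) \<Rightarrow> ('a \<Rightarrow> 'a) \<Rightarrow> ('a \<Rightarrow> 'a)" where
  "conj g h = h \<circ> g \<circ> inv h"

definition conjset :: "('a \<Rightarrow> 'a) set \<Rightarrow> ('a \<Rightarrow> 'a) \<Rightarrow> ('a \<Rightarrow> 'a) set" where
  "conjset U h = (\<lambda>g. conj g h) ` U"

text \<open>Left-to-right product of a list of permutations: prodl [g1,...,gn] = g1 g2 ... gn.\<close>
definition prodl :: "('a \<Rightarrow> 'a) list \<Rightarrow> ('a \<Rightarrow> 'a)" where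
  "prodl gs = foldl (\<lambda>acc g. g \<circ> acc) id gs"

definition cls :: "('a \<Rightarrow> 'a \<Rightarrow> bool) \<Rightarrow> 'a \<Rightarrow> 'a set" where
  "cls R x = {y. R x y}"

definition classes :: "('a \<Rightarrow> 'a \<Rightarrow> bool) \<Rightarrow> 'a set set" where
  "classes R = range (cls R)"

definition more_than_two_classes :: "('a \<Rightarrow> 'a \<Rightarrow> bool) \<Rightarrow> bool" where
  "more_than_two_classes R \<longleftrightarrow> infinite (classes R) \<or> 2 < card (classes R)"

definition symeq :: "('a \<Rightarrow> 'a \<Rightarrow> bool) \<Rightarrow> ('a \<Rightarrow> 'a) set" where
  "symeq R = {g. bij g \<and> (\<forall>x y. R x y \<longleftrightarrow> R (g x) (g y))}"

definition subgroup_of :: "('a \<Rightarrow> 'a) set \<Rightarrow> ('a \<Rightarrow> 'a \<Rightarrow> bool) \<Rightarrow> bool" where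
  "subgroup_of U R \<longleftrightarrow> U \<subseteq> symeq R \<and> id \<in> U \<and>
     (\<forall>g\<in>U. \<forall>h\<in>U. h \<circ> g \<in> U) \<and> (\<forall>g\<in>U. inv g \<in> U)"

definition ind :: "('a \<Rightarrow> 'a \<Rightarrow> bool) \<Rightarrow> ('a \<Rightarrow> 'a) \<Rightarrow> 'a set \<Rightarrow> 'a set" where
  "ind R g = (\<lambda>C. if C \<in> classes R then g ` C else C)"

definition indgrp :: "('a \<Rightarrow> 'a \<Rightarrow> bool) \<Rightarrow> ('a \<Rightarrow> 'a) set \<Rightarrow> ('a set \<Rightarrow> 'a set) set" where
  "indgrp R U = ind R ` U"

definition sharply_transitive :: "('b \<Rightarrow> 'b) set \<Rightarrow> 'b set \<Rightarrow> bool" where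
  "sharply_transitive G S \<longleftrightarrow> (\<forall>g\<in>G. \<forall>a\<in>S. g a \<in> S) \<and>
     (\<forall>a\<in>S. \<forall>b\<in>S. \<exists>!g. g \<in> G \<and> g a = b)"

inductive_set gen :: "('a \<Rightarrow> 'a) set \<Rightarrow> ('a \<Rightarrow> 'a) set" for S where
  gen_base: "g \<in> S \<Longrightarrow> g \<in> gen S"
| gen_id: "id \<in> gen S"
| gen_comp: "g \<in> gen S \<Longrightarrow> h \<in> gen S \<Longrightarrow> h \<circ> g \<in> gen S"
| gen_inv: "g \<in> gen S \<Longrightarrow> inv g \<in> gen S"

definition LM0 :: "('a \<Rightarrow> 'a \<Rightarrow> bool) \<Rightarrow> ('a \<Rightarrow> ('a \<Rightarrow> 'a) set) \<Rightarrow> bool" where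
  "LM0 R Uf \<longleftrightarrow> (\<forall>x y. R x y \<longrightarrow> indgrp R (Uf x) = indgrp R (Uf y))"

definition LM1 :: "('a \<Rightarrow> 'a \<Rightarrow> bool) \<Rightarrow> ('a \<Rightarrow> ('a \<Rightarrow> 'a) set) \<Rightarrow> bool" where
  "LM1 R Uf \<longleftrightarrow> (\<forall>x. (\<forall>g\<in>Uf x. g x = x) \<and> sharply_transitive (Uf x) (- cls R x))"

definition LM1' :: "('a \<Rightarrow> 'a \<Rightarrow> bool) \<Rightarrow> ('a \<Rightarrow> ('a \<Rightarrow> 'a) set) \<Rightarrow> bool" where
  "LM1' R Uf \<longleftrightarrow> (\<forall>x. (\<forall>g\<in>indgrp R (Uf x). g (cls R x) = cls R x) \<and>
      sharply_transitive (indgrp R (Uf x)) (classes R - {cls R x}))"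

definition LM2 :: "('a \<Rightarrow> 'a \<Rightarrow> bool) \<Rightarrow> ('a \<Rightarrow> ('a \<Rightarrow> 'a) set) \<Rightarrow> bool" where
  "LM2 R Uf \<longleftrightarrow> (\<forall>x. \<forall>g\<in>gen (\<Union>y. Uf y). conjset (Uf x) g = Uf (g x))"

definition local_moufang :: "('a \<Rightarrow> 'a \<Rightarrow> bool) \<Rightarrow> ('a \<Rightarrow> ('a \<Rightarrow> 'a) set) \<Rightarrow> bool" where
  "local_moufang R Uf \<longleftrightarrow> equivp R \<and> more_than_two_classes R \<and>
     (\<forall>x. subgroup_of (Uf x) R) \<and> LM0 R Uf \<and> LM1 R Uf \<and> LM1' R Uf \<and> LM2 R Uf"

definition construction_data ::
  "('a \<Rightarrow> 'a \<Rightarrow> bool) \<Rightarrow> ('a \<Rightarrow> 'a) set \<Rightarrow> 'a \<Rightarrow> ('a \<Rightarrow> 'a) \<Rightarrow> bool" where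
  "construction_data R U ioo \<tau> \<longleftrightarrow> equivp R \<and> more_than_two_classes R \<and>
     subgroup_of U R \<and> \<tau> \<in> symeq R \<and>
     (\<forall>g\<in>U. g ioo = ioo) \<and> sharply_transitive U (- cls R ioo) \<and>
     sharply_transitive (indgrp R U) (classes R - {cls R ioo}) \<and>
     \<not> R (\<tau> ioo) ioo \<and> \<tau> (\<tau> ioo) = ioo"

definition alpha :: "('a \<Rightarrow> 'a) set \<Rightarrow> 'a \<Rightarrow> ('a \<Rightarrow> 'a) \<Rightarrow> 'a \<Rightarrow> ('a \<Rightarrow> 'a)" where
  "alpha U ioo \<tau> x = (THE a. a \<in> U \<and> a (\<tau> ioo) = x)"

definition neg :: "('a \<Rightarrow> 'a) set \<Rightarrow> 'a \<Rightarrow> ('a \<Rightarrow> 'a) \<Rightarrow> 'a \<Rightarrow> 'a" where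
  "neg U ioo \<tau> x = inv (alpha U ioo \<tau> x) (\<tau> ioo)"

definition gamma :: "('a \<Rightarrow> 'a) set \<Rightarrow> 'a \<Rightarrow> ('a \<Rightarrow> 'a) \<Rightarrow> 'a \<Rightarrow> ('a \<Rightarrow> 'a)" where
  "gamma U ioo \<tau> x = conj (alpha U ioo \<tau> x) \<tau>"

definition MU :: "('a \<Rightarrow> 'a \<Rightarrow> bool) \<Rightarrow> ('a \<Rightarrow> 'a) set \<Rightarrow> 'a \<Rightarrow> ('a \<Rightarrow> 'a) \<Rightarrow> 'a \<Rightarrow> ('a \<Rightarrow> 'a) set" where
  "MU R U ioo \<tau> x = (if R x ioo then conjset U (gamma U ioo \<tau> (inv \<tau> x))
                     else conjset (conjset U \<tau>) (alpha U ioo \<tau> x))"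

definition is_unit :: "('a \<Rightarrow> 'a \<Rightarrow> bool) \<Rightarrow> 'a \<Rightarrow> ('a \<Rightarrow> 'a) \<Rightarrow> 'a \<Rightarrow> bool" where
  "is_unit R ioo \<tau> x \<longleftrightarrow> \<not> R x (\<tau> ioo) \<and> \<not> R x ioo"

definition mu :: "('a \<Rightarrow> 'a) set \<Rightarrow> 'a \<Rightarrow> ('a \<Rightarrow> 'a) \<Rightarrow> 'a \<Rightarrow> ('a \<Rightarrow> 'a)" where
  "mu U ioo \<tau> x = prodl [gamma U ioo \<tau> (inv \<tau> (neg U ioo \<tau> x)),
                          alpha U ioo \<tau> x,
                          gamma U ioo \<tau> (neg U ioo \<tau> (inv \<tau> x))]"

definition hh :: "('a \<Rightarrow> 'a) set \<Rightarrow> 'a \<Rightarrow> ('a \<Rightarrow> 'a) \<Rightarrow> 'a \<Rightarrow> ('a \<Rightarrow> 'a)" where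
  "hh U ioo \<tau> x = prodl [\<tau>, alpha U ioo \<tau> x, inv \<tau>,
                          alpha U ioo \<tau> (neg U ioo \<tau> (inv \<tau> x)), \<tau>,
                          alpha U ioo \<tau> (neg U ioo \<tau> (\<tau> (neg U ioo \<tau> (inv \<tau> x))))]"

end

theory Submission
  imports Defs
begin

lemma conjset_eq: "conjset A h = (\<lambda>g. h \<circ> g \<circ> inv h) ` A"
  unfolding conjset_def conj_def by simp

lemma bij_o_inv[simp]: "bij h \<Longrightarrow> h \<circ> inv h = id"
  by (meson bij_is_surj surj_iff)
lemma bij_inv_o[simp]: "bij h \<Longrightarrow> inv h \<circ> h = id"
  by (meson bij_is_inj inj_iff)
lemma bij_o_inv2[simp]: "bij h \<Longrightarrow> h \<circ> (inv h \<circ> g) = g"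
  by (simp add: comp_assoc[symmetric])
lemma bij_inv_o2[simp]: "bij h \<Longrightarrow> inv h \<circ> (h \<circ> g) = g"
  by (simp add: comp_assoc[symmetric])
lemma bij_app_inv[simp]: "bij h \<Longrightarrow> h (inv h x) = x"
  by (simp add: bij_is_surj surj_f_inv_f)
lemma bij_inv_app[simp]: "bij h \<Longrightarrow> inv h (h x) = x"
  by (simp add: bij_is_inj)

lemma cs_comp: "bij h \<Longrightarrow> bij k \<Longrightarrow> conjset (conjset A h) k = conjset A (k \<circ> h)"
proof -
  assume h: "bij h" and k: "bij k"
  have "inv (k \<circ> h) = inv h \<circ> inv k" using h k by (simp add: o_inv_distrib)
  then show ?thesis unfolding conjset_eq image_comp by (simp add: comp_assoc)
qed

lemma cs_id[simp]: "conjset A id = A" by (simp add: conjset_eq)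

lemma cs_inv: "bij h \<Longrightarrow> conjset (conjset A h) (inv h) = A"
  by (simp add: cs_comp bij_imp_bij_inv bij_is_inj)

lemma cs_inv2: "bij h \<Longrightarrow> conjset (conjset A (inv h)) h = A"
  by (simp add: cs_comp bij_imp_bij_inv)

lemma symeq_bij: "g \<in> symeq R \<Longrightarrow> bij g" by (simp add: symeq_def)
lemma symeq_R: "g \<in> symeq R \<Longrightarrow> R (g x) (g y) = R x y" by (simp add: symeq_def)
lemma symeq_comp: "g \<in> symeq R \<Longrightarrow> h \<in> symeq R \<Longrightarrow> h \<circ> g \<in> symeq R"
  by (simp add: symeq_def bij_comp)
lemma symeq_id: "id \<in> symeq R" by (simp add: symeq_def)
lemma symeq_inv: "g \<in> symeq R \<Longrightarrow> inv g \<in> symeq R"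
  unfolding symeq_def
proof (clarsimp simp: bij_imp_bij_inv)
  fix x y assume b: "bij g" and r: "\<forall>x y. R x y = R (g x) (g y)"
  show "R x y = R (inv g x) (inv g y)" using r[rule_format, of "inv g x" "inv g y"] b
    by (simp add: bij_is_surj surj_f_inv_f)
qed

lemma cs_self: "subgroup_of U R \<Longrightarrow> h \<in> U \<Longrightarrow> conjset U h = U"
proof -
  assume s: "subgroup_of U R" and h: "h \<in> U"
  have bh: "bij h" using s h by (auto simp: subgroup_of_def symeq_def)
  have sub: "conjset U k \<subseteq> U" if "k \<in> U" for k
    using s that by (auto simp: conjset_eq subgroup_of_def)
  have "U \<subseteq> conjset U h"
  proof
    fix g assume g: "g \<in> U"
    have "inv h \<circ> g \<circ> h \<in> U" using s g h by (auto simp: subgroup_of_def)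
    moreover have "g = h \<circ> (inv h \<circ> g \<circ> h) \<circ> inv h" using bh
      by (simp add: comp_assoc)
    ultimately show "g \<in> conjset U h" unfolding conjset_eq by blast
  qed
  then show ?thesis using sub[OF h] by blast
qed

lemma subgroup_conj: "subgroup_of U R \<Longrightarrow> h \<in> symeq R \<Longrightarrow> subgroup_of (conjset U h) R"
proof -
  assume s: "subgroup_of U R" and h: "h \<in> symeq R"
  have bh: "bij h" using h by (simp add: symeq_def)
  show ?thesis unfolding subgroup_of_def conjset_eq
  proof (intro conjI ballI)
    show "(\<lambda>g. h \<circ> g \<circ> inv h) ` U \<subseteq> symeq R"
      using s h by (auto simp: subgroup_of_def intro!: symeq_comp symeq_inv)
    show "id \<in> (\<lambda>g. h \<circ> g \<circ> inv h) ` U"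
      using s bh by (auto simp: subgroup_of_def image_iff intro!: bexI[of _ id])
  next
    fix a b assume "a \<in> (\<lambda>g. h \<circ> g \<circ> inv h) ` U" "b \<in> (\<lambda>g. h \<circ> g \<circ> inv h) ` U"
    then obtain g1 g2 where g: "g1 \<in> U" "g2 \<in> U" "a = h \<circ> g1 \<circ> inv h" "b = h \<circ> g2 \<circ> inv h" by auto
    have "b \<circ> a = h \<circ> (g2 \<circ> g1) \<circ> inv h" using g bh
      by (simp add: comp_assoc bij_is_inj)
    moreover have "g2 \<circ> g1 \<in> U" using s g by (auto simp: subgroup_of_def)
    ultimately show "b \<circ> a \<in> (\<lambda>g. h \<circ> g \<circ> inv h) ` U" by blast
  next
    fix a assume "a \<in> (\<lambda>g. h \<circ> g \<circ> inv h) ` U"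
    then obtain g where g: "g \<in> U" "a = h \<circ> g \<circ> inv h" by auto
    have bg: "bij g" using s g by (auto simp: subgroup_of_def symeq_def)
    have "inv a = h \<circ> inv g \<circ> inv h" using g bh bg
      by (simp add: o_inv_distrib bij_comp bij_imp_bij_inv inv_inv_eq comp_assoc)
    moreover have "inv g \<in> U" using s g by (auto simp: subgroup_of_def)
    ultimately show "inv a \<in> (\<lambda>g. h \<circ> g \<circ> inv h) ` U" by blast
  qed
qed



lemma cls_eq_iff: "equivp R \<Longrightarrow> cls R a = cls R b \<longleftrightarrow> R a b"
  unfolding cls_def
  by (metis (mono_tags, lifting) equivp_def mem_Collect_eq)

lemma img_cls: "equivp R \<Longrightarrow> k \<in> symeq R \<Longrightarrow> k ` cls R a = cls R (k a)"
proof -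
  assume e: "equivp R" and k: "k \<in> symeq R"
  have b: "bij k" using k by (simp add: symeq_def)
  show ?thesis
  proof
    show "k ` cls R a \<subseteq> cls R (k a)" using k by (auto simp: cls_def symeq_R)
    show "cls R (k a) \<subseteq> k ` cls R a"
    proof
      fix w assume "w \<in> cls R (k a)"
      then have "R (k a) (k (inv k w))" using b by (simp add: cls_def)
      then have "R a (inv k w)" using k by (simp add: symeq_R)
      then show "w \<in> k ` cls R a" using b by (auto simp: cls_def image_iff intro!: bexI[of _ "inv k w"])
    qed
  qed
qed

lemma cls_in: "cls R a \<in> classes R" by (simp add: classes_def)

lemma ind_cls: "equivp R \<Longrightarrow> k \<in> symeq R \<Longrightarrow> ind R k (cls R a) = cls R (k a)"
  by (simp add: ind_def cls_in img_cls)

lemma ind_comp: "equivp R \<Longrightarrow> f \<in> symeq R \<Longrightarrow> g \<in> symeq R \<Longrightarrow> ind R (f \<circ> g) = ind R f \<circ> ind R g"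
proof (rule ext)
  fix C assume e: "equivp R" and f: "f \<in> symeq R" and g: "g \<in> symeq R"
  show "ind R (f \<circ> g) C = (ind R f \<circ> ind R g) C"
  proof (cases "C \<in> classes R")
    case True
    then obtain a where "C = cls R a" by (auto simp: classes_def)
    then show ?thesis using e f g by (simp add: ind_cls symeq_comp)
  next
    case False
    then show ?thesis by (simp add: ind_def)
  qed
qed

lemma ind_id[simp]: "ind R id = id" by (rule ext) (simp add: ind_def)

lemma ind_inv1: "equivp R \<Longrightarrow> k \<in> symeq R \<Longrightarrow> ind R k \<circ> ind R (inv k) = id"
  by (simp add: ind_comp[symmetric] symeq_inv symeq_bij)
lemma ind_inv2: "equivp R \<Longrightarrow> k \<in> symeq R \<Longrightarrow> ind R (inv k) \<circ> ind R k = id"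
  by (simp add: ind_comp[symmetric] symeq_inv symeq_bij)

lemma indgrp_conj: "equivp R \<Longrightarrow> k \<in> symeq R \<Longrightarrow> U \<subseteq> symeq R \<Longrightarrow>
   indgrp R (conjset U k) = (\<lambda>G. ind R k \<circ> G \<circ> ind R (inv k)) ` indgrp R U"
  unfolding indgrp_def conjset_eq image_comp
  by (rule image_cong) (auto simp: ind_comp symeq_comp symeq_inv)

lemma st_conj:
  assumes st: "sharply_transitive G S" and k1: "K' \<circ> K = id" and k2: "K \<circ> K' = id"
  shows "sharply_transitive ((\<lambda>g. K \<circ> g \<circ> K') ` G) (K ` S)"
proof -
  have kk: "K' (K s) = s" for s using k1 by (metis comp_apply id_apply)
  show ?thesis unfolding sharply_transitive_def
  proof (intro conjI ballI)
    fix h a assume "h \<in> (\<lambda>g. K \<circ> g \<circ> K') ` G" "a \<in> K ` S"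
    then obtain g s where "g \<in> G" "h = K \<circ> g \<circ> K'" "s \<in> S" "a = K s" by auto
    then show "h a \<in> K ` S" using st kk by (auto simp: sharply_transitive_def)
  next
    fix a b assume "a \<in> K ` S" "b \<in> K ` S"
    then obtain s t where s: "s \<in> S" "a = K s" and t: "t \<in> S" "b = K t" by auto
    obtain g where g: "g \<in> G" "g s = t" and u: "\<And>g'. g' \<in> G \<Longrightarrow> g' s = t \<Longrightarrow> g' = g"
      using st s t unfolding sharply_transitive_def by metis
    show "\<exists>!h. h \<in> (\<lambda>g. K \<circ> g \<circ> K') ` G \<and> h a = b"
    proof
      show "K \<circ> g \<circ> K' \<in> (\<lambda>g. K \<circ> g \<circ> K') ` G \<and> (K \<circ> g \<circ> K') a = b"
        using g s t kk by auto
    next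
      fix h assume "h \<in> (\<lambda>g. K \<circ> g \<circ> K') ` G \<and> h a = b"
      then obtain g' where g': "g' \<in> G" "h = K \<circ> g' \<circ> K'" "K (g' s) = K t" using s t kk by auto
      then have "g' s = t" using kk by metis
      then show "h = K \<circ> g \<circ> K'" using u g' by auto
    qed
  qed
qed

lemma st_conjset: "sharply_transitive G S \<Longrightarrow> bij k \<Longrightarrow> sharply_transitive (conjset G k) (k ` S)"
  unfolding conjset_eq by (rule st_conj) auto

lemma img_compl_cls: "equivp R \<Longrightarrow> k \<in> symeq R \<Longrightarrow> k ` (- cls R a) = - cls R (k a)"
  by (metis bij_image_Compl_eq img_cls symeq_bij)

lemma ind_img_classes: "equivp R \<Longrightarrow> k \<in> symeq R \<Longrightarrow>
   ind R k ` (classes R - {cls R a}) = classes R - {cls R (k a)}"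
proof -
  assume e: "equivp R" and k: "k \<in> symeq R"
  have b: "bij k" using k by (simp add: symeq_bij)
  show ?thesis
  proof
    show "ind R k ` (classes R - {cls R a}) \<subseteq> classes R - {cls R (k a)}"
    proof
      fix D assume "D \<in> ind R k ` (classes R - {cls R a})"
      then obtain C where C: "C \<in> classes R" "C \<noteq> cls R a" "D = ind R k C" by (elim imageE DiffE) simp
      then obtain b where bb: "C = cls R b" unfolding classes_def by (elim rangeE) 
      have "\<not> R b a" using C(2) bb cls_eq_iff[OF e] by simp
      then have "\<not> R (k b) (k a)" using symeq_R[OF k] by simp
      then have "cls R (k b) \<noteq> cls R (k a)" using cls_eq_iff[OF e] by simp
      moreover have "D = cls R (k b)" using C(3) bb ind_cls[OF e k] by simp
      ultimately show "D \<in> classes R - {cls R (k a)}" by (simp add: cls_in del: Diff_iff) (simp add: cls_in)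
    qed
    show "classes R - {cls R (k a)} \<subseteq> ind R k ` (classes R - {cls R a})"
    proof
      fix C assume C: "C \<in> classes R - {cls R (k a)}"
      then obtain c where c: "C = cls R c" unfolding classes_def by blast
      have "C = ind R k (cls R (inv k c))" using c ind_cls[OF e k] b by simp
      moreover have "\<not> R (inv k c) a"
      proof
        assume "R (inv k c) a"
        then have "R c (k a)" using symeq_R[OF k, of "inv k c" a] b by simp
        then show False using C c cls_eq_iff[OF e] by simp
      qed
      then have "cls R (inv k c) \<noteq> cls R a" using cls_eq_iff[OF e] by simp
      then have "cls R (inv k c) \<in> classes R - {cls R a}" by (simp add: cls_in)
      ultimately show "C \<in> ind R k ` (classes R - {cls R a})" by (rule image_eqI)
    qed
  qed
qed



locale cdl =
  fixes R :: "'a \<Rightarrow> 'a \<Rightarrow> bool" and U :: "('a \<Rightarrow> 'a) set" and ioo :: 'a and \<tau> :: "'a \<Rightarrow> 'a"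
  assumes cd: "construction_data R U ioo \<tau>"
begin

abbreviation z where "z \<equiv> \<tau> ioo"
abbreviation V where "V \<equiv> conjset U \<tau>"
abbreviation M where "M \<equiv> MU R U ioo \<tau>"
abbreviation al where "al \<equiv> alpha U ioo \<tau>"
abbreviation ng where "ng \<equiv> neg U ioo \<tau>"
abbreviation ga where "ga \<equiv> gamma U ioo \<tau>"

lemma eqv: "equivp R" using cd by (simp add: construction_data_def)
lemma Rrefl[simp]: "R x x" using eqv by (simp add: equivp_reflp)
lemma Rsym: "R x y \<Longrightarrow> R y x" using equivp_symp[OF eqv] .
lemma Rtrans: "R x y \<Longrightarrow> R y w \<Longrightarrow> R x w" using equivp_transp[OF eqv] .
lemma mt2: "more_than_two_classes R" using cd by (simp add: construction_data_def)
lemma subU: "subgroup_of U R" using cd by (simp add: construction_data_def)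
lemma U_sym: "u \<in> U \<Longrightarrow> u \<in> symeq R" using subU by (auto simp: subgroup_of_def)
lemma U_bij: "u \<in> U \<Longrightarrow> bij u" by (rule symeq_bij[OF U_sym])
lemma U_R: "u \<in> U \<Longrightarrow> R (u x) (u y) = R x y" by (rule symeq_R[OF U_sym])
lemma U_comp: "u \<in> U \<Longrightarrow> w \<in> U \<Longrightarrow> w \<circ> u \<in> U" using subU by (auto simp: subgroup_of_def)
lemma U_inv: "u \<in> U \<Longrightarrow> inv u \<in> U" using subU by (auto simp: subgroup_of_def)
lemma U_id: "id \<in> U" using subU by (auto simp: subgroup_of_def)
lemma U_fix: "u \<in> U \<Longrightarrow> u ioo = ioo" using cd by (simp add: construction_data_def)
lemma stU: "sharply_transitive U (- cls R ioo)" using cd by (simp add: construction_data_def)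
lemma stI: "sharply_transitive (indgrp R U) (classes R - {cls R ioo})"
  using cd by (simp add: construction_data_def)
lemma tau_sym: "\<tau> \<in> symeq R" using cd by (simp add: construction_data_def)
lemma tau_bij: "bij \<tau>" by (rule symeq_bij[OF tau_sym])
lemma z_not: "\<not> R z ioo" using cd by (simp add: construction_data_def)
lemma z_not': "\<not> R ioo z"
proof
  assume "R ioo z"
  then have "R z ioo" by (rule Rsym)
  with z_not show False by simp
qed
lemma tt[simp]: "\<tau> z = ioo" using cd by (simp add: construction_data_def)
lemma itau_ioo[simp]: "inv \<tau> ioo = z" using tau_bij tt by (metis bij_inv_app)
lemma itau_z[simp]: "inv \<tau> z = ioo" using tau_bij by simp
lemma itau_sym: "inv \<tau> \<in> symeq R" by (rule symeq_inv[OF tau_sym])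
lemma tau_R1: "R (\<tau> a) ioo = R a z" using symeq_R[OF tau_sym, of a z] by simp
lemma tau_R2: "R (\<tau> a) z = R a ioo" using symeq_R[OF tau_sym, of a ioo] by simp
lemma itau_R1: "R (inv \<tau> a) ioo = R a z" using symeq_R[OF itau_sym, of a z] by simp
lemma itau_R2: "R (inv \<tau> a) z = R a ioo" using symeq_R[OF itau_sym, of a ioo] by simp

lemma U_notR: "u \<in> U \<Longrightarrow> R (u x) ioo = R x ioo"
proof -
  assume u: "u \<in> U"
  show ?thesis using U_R[OF u, of x ioo] U_fix[OF u] by simp
qed

lemma alpha_ex: "\<not> R x ioo \<Longrightarrow> \<exists>!g. g \<in> U \<and> g z = x"
proof -
  assume x: "\<not> R x ioo"
  have "z \<in> - cls R ioo" "x \<in> - cls R ioo" using z_not' x Rsym by (auto simp: cls_def)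
  then show ?thesis using stU unfolding sharply_transitive_def by blast
qed

lemma alpha: "\<not> R x ioo \<Longrightarrow> al x \<in> U \<and> al x z = x"
proof -
  assume x: "\<not> R x ioo"
  show ?thesis unfolding alpha_def by (rule theI'[OF alpha_ex[OF x]])
qed

lemma alpha_U: "\<not> R x ioo \<Longrightarrow> al x \<in> U" using alpha by blast
lemma alpha_z[simp]: "\<not> R x ioo \<Longrightarrow> al x z = x" using alpha by blast

lemma alpha_uniq: "u \<in> U \<Longrightarrow> al (u z) = u"
proof -
  assume u: "u \<in> U"
  have x: "\<not> R (u z) ioo" using U_notR[OF u] z_not by simp
  show ?thesis unfolding alpha_def by (rule the1_equality[OF alpha_ex[OF x]]) (simp add: u)
qed

lemma alpha_0[simp]: "al z = id"
  using alpha_uniq[OF U_id] by simp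

lemma neg_def': "ng x = inv (al x) z" by (simp add: neg_def)

lemma neg_notR: "\<not> R x ioo \<Longrightarrow> \<not> R (ng x) ioo"
  using U_notR[OF U_inv[OF alpha_U]] z_not by (simp add: neg_def)

lemma alpha_neg: "\<not> R x ioo \<Longrightarrow> al (ng x) = inv (al x)"
  using alpha_uniq[OF U_inv[OF alpha_U]] by (simp add: neg_def)

lemma neg_neg[simp]: "\<not> R x ioo \<Longrightarrow> ng (ng x) = x"
  using alpha_neg U_bij[OF alpha_U] by (simp add: neg_def inv_inv_eq)

lemma neg_Rz: "\<not> R x ioo \<Longrightarrow> R (ng x) z = R x z"
proof -
  assume x: "\<not> R x ioo"
  have "R (ng x) z = R (al x (ng x)) (al x z)" using U_R[OF alpha_U[OF x]] by simp
  also have "\<dots> = R z x" using x U_bij[OF alpha_U[OF x]] by (simp add: neg_def)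
  finally show ?thesis using Rsym[of z x] Rsym[of x z] by blast
qed

lemma gamma_eq: "ga a = \<tau> \<circ> al a \<circ> inv \<tau>" by (simp add: gamma_def conj_def)

lemma V_sub: "subgroup_of V R" using subgroup_conj[OF subU tau_sym] .
lemma V_sym: "v \<in> V \<Longrightarrow> v \<in> symeq R" using V_sub by (auto simp: subgroup_of_def)
lemma V_bij: "v \<in> V \<Longrightarrow> bij v" by (rule symeq_bij[OF V_sym])
lemma V_R: "v \<in> V \<Longrightarrow> R (v x) (v y) = R x y" by (rule symeq_R[OF V_sym])
lemma V_comp: "u \<in> V \<Longrightarrow> w \<in> V \<Longrightarrow> w \<circ> u \<in> V" using V_sub by (auto simp: subgroup_of_def)
lemma V_inv: "u \<in> V \<Longrightarrow> inv u \<in> V" using V_sub by (auto simp: subgroup_of_def)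
lemma V_fix: "v \<in> V \<Longrightarrow> v z = z" by (auto simp: conjset_eq U_fix)
lemma V_notR: "v \<in> V \<Longrightarrow> R (v x) z = R x z"
proof -
  assume v: "v \<in> V"
  show ?thesis using V_R[OF v, of x z] V_fix[OF v] by simp
qed

lemma gamma_V: "\<not> R a ioo \<Longrightarrow> ga a \<in> V"
  using alpha_U by (auto simp: gamma_eq conjset_eq)
lemma gamma_ioo[simp]: "\<not> R a ioo \<Longrightarrow> ga a ioo = \<tau> a" by (simp add: gamma_eq)
lemma gamma_sym: "\<not> R a ioo \<Longrightarrow> ga a \<in> symeq R" by (rule V_sym[OF gamma_V])

lemma V_gamma: "v \<in> V \<Longrightarrow> \<not> R (inv \<tau> (v ioo)) ioo \<and> v = ga (inv \<tau> (v ioo))"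
proof -
  assume "v \<in> V"
  then obtain u where u: "u \<in> U" "v = \<tau> \<circ> u \<circ> inv \<tau>" by (auto simp: conjset_eq)
  have 1: "inv \<tau> (v ioo) = u z" using u tau_bij by simp
  have 2: "\<not> R (u z) ioo" using U_notR[OF u(1)] z_not by simp
  have "ga (u z) = v" unfolding gamma_eq alpha_uniq[OF u(1)] u(2) ..
  then show ?thesis using 1 2 by simp
qed

lemma gamma_inv: "\<not> R a ioo \<Longrightarrow> inv (ga a) = ga (ng a)"
  using tau_bij U_bij[OF alpha_U] alpha_neg
  by (simp add: gamma_eq o_inv_distrib bij_comp bij_imp_bij_inv inv_inv_eq comp_assoc)

lemma M_ioo: "M ioo = U"
proof -
  have "ga z = id" by (simp add: gamma_eq tau_bij)
  then show ?thesis by (simp add: MU_def)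
qed

lemma M_z: "M z = V" using z_not by (simp add: MU_def)

definition kk where "kk x = (if R x ioo then ga (inv \<tau> x) else al x \<circ> \<tau>)"

lemma kk: "M x = conjset U (kk x) \<and> kk x \<in> symeq R \<and> kk x ioo = x"
proof (cases "R x ioo")
  case True
  have a: "\<not> R (inv \<tau> x) ioo"
  proof
    assume "R (inv \<tau> x) ioo"
    then have "R x z" by (simp add: itau_R1)
    then have "R z ioo" using True by (meson Rsym Rtrans)
    then show False using z_not by simp
  qed
  then show ?thesis using True tau_bij
    by (simp add: kk_def MU_def gamma_sym)
next
  case False
  then show ?thesis using tau_bij U_bij[OF alpha_U[OF False]]
    by (simp add: kk_def MU_def cs_comp symeq_comp tau_sym U_sym alpha_U)
qed

lemma M_sub: "subgroup_of (M x) R"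
proof -
  have "M x = conjset U (kk x)" "kk x \<in> symeq R" using kk by auto
  then show ?thesis using subgroup_conj[OF subU] by simp
qed

lemma mu_eq: "mu U ioo \<tau> y = ga (ng (inv \<tau> y)) \<circ> al y \<circ> ga (inv \<tau> (ng y))"
  unfolding mu_def prodl_def by (simp only: foldl_Cons foldl_Nil comp_id comp_assoc)

lemma hh_eq: "hh U ioo \<tau> x = al (ng (\<tau> (ng (inv \<tau> x)))) \<circ> \<tau> \<circ> al (ng (inv \<tau> x)) \<circ> inv \<tau> \<circ> al x \<circ> \<tau>"
  unfolding hh_def prodl_def by (simp only: foldl_Cons foldl_Nil comp_id comp_assoc)

end


context cdl begin

lemma LM1_part: "(\<forall>g\<in>M x. g x = x) \<and> sharply_transitive (M x) (- cls R x)"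
proof -
  have k: "M x = conjset U (kk x)" "kk x \<in> symeq R" "kk x ioo = x" using kk by auto
  have b: "bij (kk x)" using symeq_bij[OF k(2)] .
  have 1: "\<forall>g\<in>M x. g x = x"
  proof
    fix g assume "g \<in> M x"
    then obtain u where u: "u \<in> U" "g = kk x \<circ> u \<circ> inv (kk x)" using k(1) by (auto simp: conjset_eq)
    have "inv (kk x) x = ioo" using b k(3) by (metis bij_inv_app)
    then show "g x = x" using u U_fix[OF u(1)] k(3) by simp
  qed
  have "sharply_transitive (M x) (kk x ` (- cls R ioo))"
    using st_conjset[OF stU b] k(1) by simp
  moreover have "kk x ` (- cls R ioo) = - cls R x" using img_compl_cls[OF eqv k(2)] k(3) by simp
  ultimately show ?thesis using 1 by simp
qed

lemma LM1_holds: "LM1 R M" unfolding LM1_def using LM1_part by blast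

lemma U_symeq: "U \<subseteq> symeq R" using U_sym by blast

lemma indgrp_M: "indgrp R (M x) = (\<lambda>G. ind R (kk x) \<circ> G \<circ> ind R (inv (kk x))) ` indgrp R U"
proof -
  have k: "M x = conjset U (kk x)" "kk x \<in> symeq R" using kk by auto
  show ?thesis using indgrp_conj[OF eqv k(2) U_symeq] k(1) by simp
qed

lemma LM1'_part: "(\<forall>g\<in>indgrp R (M x). g (cls R x) = cls R x) \<and>
      sharply_transitive (indgrp R (M x)) (classes R - {cls R x})"
proof -
  have k: "kk x \<in> symeq R" "kk x ioo = x" using kk by auto
  have ki: "inv (kk x) \<in> symeq R" using symeq_inv[OF k(1)] .
  have b: "bij (kk x)" using symeq_bij[OF k(1)] .
  have 1: "\<forall>g\<in>indgrp R (M x). g (cls R x) = cls R x"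
  proof
    fix g assume "g \<in> indgrp R (M x)"
    then obtain u where u: "u \<in> U" "g = ind R (kk x) \<circ> ind R u \<circ> ind R (inv (kk x))"
      unfolding indgrp_M by (auto simp: indgrp_def)
    have "ind R (inv (kk x)) (cls R x) = cls R ioo" using ind_cls[OF eqv ki] b k(2)
      by (metis bij_inv_app)
    moreover have "ind R u (cls R ioo) = cls R ioo" using ind_cls[OF eqv U_sym[OF u(1)]] U_fix[OF u(1)]
      by simp
    moreover have "ind R (kk x) (cls R ioo) = cls R x" using ind_cls[OF eqv k(1)] k(2) by simp
    ultimately show "g (cls R x) = cls R x" using u(2) by simp
  qed
  have "sharply_transitive (indgrp R (M x)) (ind R (kk x) ` (classes R - {cls R ioo}))"
    unfolding indgrp_M by (rule st_conj[OF stI ind_inv2[OF eqv k(1)] ind_inv1[OF eqv k(1)]])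
  moreover have "ind R (kk x) ` (classes R - {cls R ioo}) = classes R - {cls R x}"
    using ind_img_classes[OF eqv k(1)] k(2) by simp
  ultimately show ?thesis using 1 by simp
qed

lemma LM1'_holds: "LM1' R M" unfolding LM1'_def using LM1'_part by blast

lemma ind_U_uniq: "u \<in> U \<Longrightarrow> w \<in> U \<Longrightarrow> \<not> R a ioo \<Longrightarrow> R (u a) (w a) \<Longrightarrow> ind R u = ind R w"
proof -
  assume u: "u \<in> U" and w: "w \<in> U" and a: "\<not> R a ioo" and r: "R (u a) (w a)"
  have S: "cls R a \<in> classes R - {cls R ioo}" using a cls_eq_iff[OF eqv] by (simp add: cls_in)
  have "ind R u (cls R a) = ind R w (cls R a)"
    using ind_cls[OF eqv U_sym[OF u]] ind_cls[OF eqv U_sym[OF w]] r cls_eq_iff[OF eqv] by simp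
  moreover have "ind R u \<in> indgrp R U" "ind R w \<in> indgrp R U" using u w by (auto simp: indgrp_def)
  ultimately show ?thesis using stI S unfolding sharply_transitive_def by metis
qed

lemma ind_kk: "R x y \<Longrightarrow> ind R (kk x) = ind R (kk y)"
proof -
  assume xy: "R x y"
  show ?thesis
  proof (cases "R x ioo")
    case True
    then have y: "R y ioo" using xy Rsym Rtrans by metis
    have gid: "ind R (ga (inv \<tau> w)) = id" if w: "R w ioo" for w
    proof -
      have a: "\<not> R (inv \<tau> w) ioo" using w itau_R1[of w] z_not Rsym Rtrans by metis
      have az: "R (inv \<tau> w) z" using w itau_R2 by simp
      have "ind R (al (inv \<tau> w)) = ind R id"
        using ind_U_uniq[OF alpha_U[OF a] U_id z_not] a az Rsym by simp
      then have "ind R (al (inv \<tau> w)) = id" by simp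
      moreover have s: "al (inv \<tau> w) \<in> symeq R" using U_sym[OF alpha_U[OF a]] .
      have "ind R (\<tau> \<circ> al (inv \<tau> w) \<circ> inv \<tau>) = ind R \<tau> \<circ> ind R (al (inv \<tau> w)) \<circ> ind R (inv \<tau>)"
        using ind_comp[OF eqv] tau_sym itau_sym s symeq_comp by metis
      ultimately show ?thesis unfolding gamma_eq using ind_inv1[OF eqv tau_sym] by simp
    qed
    show ?thesis using True y gid by (simp add: kk_def)
  next
    case False
    then have y: "\<not> R y ioo" using xy Rtrans by metis
    have "ind R (al x) = ind R (al y)"
      using ind_U_uniq[OF alpha_U[OF False] alpha_U[OF y] z_not] False y xy by simp
    then show ?thesis using False y ind_comp[OF eqv] U_sym alpha_U tau_sym by (simp add: kk_def)
  qed
qed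

lemma LM0_holds: "LM0 R M"
  unfolding LM0_def
proof (intro allI impI)
  fix x y assume xy: "R x y"
  have k: "kk x \<in> symeq R" "kk y \<in> symeq R" using kk by auto
  have e: "ind R (kk x) = ind R (kk y)" using ind_kk[OF xy] .
  have "ind R (inv (kk x)) = ind R (inv (kk x)) \<circ> (ind R (kk y) \<circ> ind R (inv (kk y)))"
    using ind_inv1[OF eqv k(2)] by simp
  also have "\<dots> = (ind R (inv (kk x)) \<circ> ind R (kk x)) \<circ> ind R (inv (kk y))"
    using e by (simp add: comp_assoc)
  also have "\<dots> = ind R (inv (kk y))" using ind_inv2[OF eqv k(1)] by simp
  finally show "indgrp R (M x) = indgrp R (M y)" unfolding indgrp_M using e by simp
qed

end


context cdl begin

abbreviation un where "un \<equiv> is_unit R ioo \<tau>"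
abbreviation mu' where "mu' \<equiv> mu U ioo \<tau>"

lemma un_def': "un x \<longleftrightarrow> \<not> R x z \<and> \<not> R x ioo" by (simp add: is_unit_def)

lemma un_neg: "un x \<Longrightarrow> un (ng x)"
  using neg_notR neg_Rz by (simp add: is_unit_def)

lemma inv_alpha_self: "\<not> R w ioo \<Longrightarrow> inv (al w) w = z"
  using alpha_z[of w] U_bij[OF alpha_U] by (metis bij_inv_app)

lemma al_sym: "\<not> R w ioo \<Longrightarrow> al w \<in> symeq R" by (rule U_sym[OF alpha_U])

lemma mu_parts:
  assumes y: "un y"
  shows "\<not> R (ng (inv \<tau> y)) ioo" "\<not> R (inv \<tau> (ng y)) ioo" "\<not> R (inv \<tau> y) ioo" "\<not> R y ioo"
proof -
  show 3: "\<not> R (inv \<tau> y) ioo" using y by (simp add: un_def' itau_R1)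
  show "\<not> R (ng (inv \<tau> y)) ioo" using neg_notR[OF 3] .
  show 4: "\<not> R y ioo" using y by (simp add: un_def')
  show "\<not> R (inv \<tau> (ng y)) ioo" using y neg_Rz[OF 4] by (simp add: un_def' itau_R1)
qed

lemma mu_sym: "un y \<Longrightarrow> mu' y \<in> symeq R"
  unfolding mu_eq using mu_parts[of y]
  by (intro symeq_comp gamma_sym al_sym) auto

lemma mu_bij: "un y \<Longrightarrow> bij (mu' y)" using symeq_bij[OF mu_sym] .

lemma mu_ioo: "un y \<Longrightarrow> mu' y ioo = z"
proof -
  assume y: "un y"
  note p = mu_parts[OF y]
  have "ga (inv \<tau> (ng y)) ioo = ng y" using p(2) tau_bij by simp
  moreover have "al y (ng y) = z" using p(4) U_bij[OF alpha_U[OF p(4)]] by (simp add: neg_def)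
  moreover have "ga (ng (inv \<tau> y)) z = z" using V_fix[OF gamma_V[OF p(1)]] .
  ultimately show ?thesis by (simp add: mu_eq)
qed

lemma mu_z: "un y \<Longrightarrow> mu' y z = ioo"
proof -
  assume y: "un y"
  note p = mu_parts[OF y]
  have "ga (inv \<tau> (ng y)) z = z" using V_fix[OF gamma_V[OF p(2)]] .
  moreover have "al y z = y" using p(4) by simp
  moreover have "ga (ng (inv \<tau> y)) y = ioo"
    using alpha_neg[OF p(3)] inv_alpha_self[OF p(3)] tau_bij by (simp add: gamma_eq)
  ultimately show ?thesis by (simp add: mu_eq)
qed

lemma mu_neg: "un y \<Longrightarrow> mu' (ng y) = inv (mu' y)"
proof -
  assume y: "un y"
  note p = mu_parts[OF y]
  have b1: "bij (ga (ng (inv \<tau> y)))" using symeq_bij[OF gamma_sym[OF p(1)]] .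
  have b2: "bij (al y)" using U_bij[OF alpha_U[OF p(4)]] .
  have b3: "bij (ga (inv \<tau> (ng y)))" using symeq_bij[OF gamma_sym[OF p(2)]] .
  have "inv (mu' y) = inv (ga (inv \<tau> (ng y))) \<circ> inv (al y) \<circ> inv (ga (ng (inv \<tau> y)))"
    unfolding mu_eq using b1 b2 b3 by (simp add: o_inv_distrib bij_comp comp_assoc)
  also have "\<dots> = ga (ng (inv \<tau> (ng y))) \<circ> al (ng y) \<circ> ga (inv \<tau> (ng (ng y)))"
    using gamma_inv[OF p(2)] gamma_inv[OF p(1)] alpha_neg[OF p(4)] neg_neg[OF p(3)] neg_neg[OF p(4)]
    by simp
  finally show ?thesis by (simp add: mu_eq)
qed

lemma ii_iff: "un x \<Longrightarrow> (conjset U (hh U ioo \<tau> x) = U \<longleftrightarrow> conjset V (mu' x) = U)"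
proof -
  assume x: "un x"
  note p = mu_parts[OF x]
  define b where "b = ng (inv \<tau> x)"
  define c where "c = inv \<tau> (ng x)"
  define v where "v = ng (\<tau> b)"
  have bb: "\<not> R b ioo" using p b_def by simp
  have cc: "\<not> R c ioo" using p c_def by simp
  have "\<not> R (\<tau> b) ioo" using tau_R1 b_def neg_Rz[OF p(3)] itau_R2 p(4) by simp
  then have vv: "\<not> R v ioo" using neg_notR v_def by simp
  have bc: "bij (al c)" using U_bij[OF alpha_U[OF cc]] .
  have hh: "hh U ioo \<tau> x = al v \<circ> (mu' x \<circ> \<tau> \<circ> inv (al c))"
    unfolding hh_eq mu_eq gamma_eq b_def[symmetric] c_def[symmetric] v_def[symmetric]
    using tau_bij bc by (simp add: comp_assoc)
  have mb: "bij (mu' x)" using mu_bij[OF x] .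
  have "conjset U (mu' x \<circ> \<tau> \<circ> inv (al c)) = conjset (conjset U (inv (al c))) (mu' x \<circ> \<tau>)"
    using cs_comp[OF bij_imp_bij_inv[OF bc] bij_comp[OF tau_bij mb]] by simp
  also have "\<dots> = conjset U (mu' x \<circ> \<tau>)" using cs_self[OF subU U_inv[OF alpha_U[OF cc]]] by simp
  also have "\<dots> = conjset V (mu' x)" using cs_comp[OF tau_bij mb] by simp
  finally have Ke: "conjset U (mu' x \<circ> \<tau> \<circ> inv (al c)) = conjset V (mu' x)" .
  have Kb: "bij (mu' x \<circ> \<tau> \<circ> inv (al c))"
    using bij_comp[OF bij_imp_bij_inv[OF bc] bij_comp[OF tau_bij mb]] by (simp add: comp_assoc)
  have e: "conjset U (hh U ioo \<tau> x) = conjset (conjset V (mu' x)) (al v)"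
    unfolding hh cs_comp[OF Kb U_bij[OF alpha_U[OF vv]], symmetric] Ke ..
  show ?thesis
  proof
    assume "conjset U (hh U ioo \<tau> x) = U"
    then have "conjset (conjset V (mu' x)) (al v) = U" using e by simp
    then have "conjset (conjset (conjset V (mu' x)) (al v)) (inv (al v)) = conjset U (inv (al v))" by simp
    then show "conjset V (mu' x) = U"
      using cs_inv[OF U_bij[OF alpha_U[OF vv]]] cs_self[OF subU U_inv[OF alpha_U[OF vv]]] by simp
  next
    assume "conjset V (mu' x) = U"
    then show "conjset U (hh U ioo \<tau> x) = U" using e cs_self[OF subU alpha_U[OF vv]] by simp
  qed
qed

lemma Vmu_iff: "un x \<Longrightarrow> (conjset V (mu' x) = U \<longleftrightarrow> V = conjset U (mu' (ng x)))"
proof -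
  assume x: "un x"
  have b: "bij (mu' x)" using mu_bij[OF x] .
  show ?thesis
  proof
    assume "conjset V (mu' x) = U"
    then show "V = conjset U (mu' (ng x))" using cs_inv[OF b, of V] mu_neg[OF x] by simp
  next
    assume "V = conjset U (mu' (ng x))"
    then show "conjset V (mu' x) = U" using cs_inv2[OF b, of U] mu_neg[OF x] by simp
  qed
qed

lemma ii_iii: "(\<forall>x. un x \<longrightarrow> conjset U (hh U ioo \<tau> x) = U) \<longleftrightarrow> (\<forall>x. un x \<longrightarrow> V = conjset U (mu' x))"
proof
  assume H: "\<forall>x. un x \<longrightarrow> conjset U (hh U ioo \<tau> x) = U"
  show "\<forall>x. un x \<longrightarrow> V = conjset U (mu' x)"
  proof (intro allI impI)
    fix x assume x: "un x"
    have n: "un (ng x)" using un_neg[OF x] .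
    have "V = conjset U (mu' (ng (ng x)))" using H n ii_iff[OF n] Vmu_iff[OF n] by simp
    then show "V = conjset U (mu' x)" using neg_neg x by (simp add: un_def')
  qed
next
  assume H: "\<forall>x. un x \<longrightarrow> V = conjset U (mu' x)"
  show "\<forall>x. un x \<longrightarrow> conjset U (hh U ioo \<tau> x) = U"
  proof (intro allI impI)
    fix x assume x: "un x"
    have h: "V = conjset U (mu' (ng x))" using H un_neg[OF x] by blast
    have "conjset V (mu' x) = U" using iffD2[OF Vmu_iff[OF x] h] .
    then show "conjset U (hh U ioo \<tau> x) = U" using iffD2[OF ii_iff[OF x]] by blast
  qed
qed

end


context cdl begin

definition Pt where "Pt g x \<longleftrightarrow> conjset (M x) g = M (g x)"

lemma Pt_comp: "bij g \<Longrightarrow> bij h \<Longrightarrow> Pt g x \<Longrightarrow> Pt h (g x) \<Longrightarrow> Pt (h \<circ> g) x"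
  unfolding Pt_def by (simp add: cs_comp[symmetric])

lemma Pt_inv: "bij g \<Longrightarrow> Pt g (inv g x) \<Longrightarrow> Pt (inv g) x"
proof -
  assume b: "bij g" and p: "Pt g (inv g x)"
  have "conjset (M (inv g x)) g = M x" using p b by (simp add: Pt_def)
  then have "conjset (M x) (inv g) = conjset (conjset (M (inv g x)) g) (inv g)" by simp
  also have "\<dots> = M (inv g x)" using cs_inv[OF b] by simp
  finally show ?thesis by (simp add: Pt_def)
qed

lemma Pt_U: "u \<in> U \<Longrightarrow> \<not> R x ioo \<Longrightarrow> Pt u x"
proof -
  assume u: "u \<in> U" and x: "\<not> R x ioo"
  have ux: "\<not> R (u x) ioo" using U_notR[OF u] x by simp
  have e: "u \<circ> al x = al (u x)"
    using alpha_uniq[OF U_comp[OF alpha_U[OF x] u]] x by simp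
  have "conjset (M x) u = conjset V (u \<circ> al x)"
    using x cs_comp[OF U_bij[OF alpha_U[OF x]] U_bij[OF u]] by (simp add: MU_def)
  also have "\<dots> = M (u x)" using e ux by (simp add: MU_def)
  finally show ?thesis by (simp add: Pt_def)
qed

lemma exists_unit: "\<exists>y. un y"
proof (rule ccontr)
  assume "\<not> (\<exists>y. un y)"
  then have "\<forall>y. R y z \<or> R y ioo" by (simp add: un_def')
  then have "classes R \<subseteq> {cls R z, cls R ioo}"
    unfolding classes_def using cls_eq_iff[OF eqv] by auto
  moreover have "card {cls R z, cls R ioo} \<le> 2" by (simp add: card_insert_if)
  ultimately have "finite (classes R)" "card (classes R) \<le> 2"
    using finite_subset card_mono by (blast, metis finite.emptyI finite.insertI le_trans)
  then show False using mt2 by (simp add: more_than_two_classes_def)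
qed

context
  assumes H3: "\<forall>x. un x \<longrightarrow> V = conjset U (mu' x)"
begin

lemma iv: "un y \<Longrightarrow> conjset V (al y) = conjset U (ga (inv \<tau> y))"
proof -
  assume y: "un y"
  define x where "x = ng y"
  have x: "un x" using un_neg[OF y] x_def by simp
  note p = mu_parts[OF x]
  define b where "b = ng (inv \<tau> x)"
  define c where "c = inv \<tau> (ng x)"
  have cy: "c = inv \<tau> y" using c_def x_def neg_neg y by (simp add: un_def')
  have bb: "\<not> R b ioo" using p b_def by simp
  have cc: "\<not> R c ioo" using p c_def by simp
  have b1: "bij (ga b)" using symeq_bij[OF gamma_sym[OF bb]] .
  have b2: "bij (al x)" using U_bij[OF alpha_U[OF p(4)]] .
  have b3: "bij (ga c)" using symeq_bij[OF gamma_sym[OF cc]] .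
  have V1: "V = conjset U (ga b \<circ> al x \<circ> ga c)" using H3 x mu_eq b_def c_def by simp
  have "conjset V (inv (ga b)) = conjset U (inv (ga b) \<circ> (ga b \<circ> al x \<circ> ga c))"
    unfolding V1 using cs_comp[OF bij_comp[OF bij_comp[OF b3 b2] b1] bij_imp_bij_inv[OF b1]] by (simp add: comp_assoc)
  also have "\<dots> = conjset U (al x \<circ> ga c)" using b1 by (simp add: comp_assoc)
  finally have V2: "conjset V (inv (ga b)) = conjset U (al x \<circ> ga c)" .
  have nb: "\<not> R (ng b) ioo" using neg_notR[OF bb] .
  have "conjset V (inv (ga b)) = conjset U (inv (ga b) \<circ> \<tau>)"
    using cs_comp[OF tau_bij bij_imp_bij_inv[OF b1]] by (simp add: comp_assoc)
  also have "inv (ga b) \<circ> \<tau> = \<tau> \<circ> al (ng b)" using gamma_inv[OF bb] tau_bij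
    by (simp add: gamma_eq comp_assoc)
  also have "conjset U (\<tau> \<circ> al (ng b)) = V"
    using cs_comp[OF U_bij[OF alpha_U[OF nb]] tau_bij, symmetric] cs_self[OF subU alpha_U[OF nb]]
    by simp
  finally have "V = conjset U (al x \<circ> ga c)" using V2 by simp
  then have "conjset V (inv (al x)) = conjset U (inv (al x) \<circ> (al x \<circ> ga c))"
    using cs_comp[OF bij_comp[OF b3 b2] bij_imp_bij_inv[OF b2]] by (simp add: comp_assoc)
  also have "\<dots> = conjset U (ga c)" using b2 by simp
  finally show ?thesis using alpha_neg[OF p(4)] x_def neg_neg y cy by (simp add: un_def')
qed

lemma M_ga: "\<not> R x z \<Longrightarrow> M x = conjset U (ga (inv \<tau> x))"
proof (cases "R x ioo")
  case True
  then show ?thesis by (simp add: MU_def)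
next
  case False
  assume "\<not> R x z"
  then have "un x" using False by (simp add: un_def')
  then show ?thesis using iv False by (simp add: MU_def)
qed

lemma Pt_V: "v \<in> V \<Longrightarrow> \<not> R x z \<Longrightarrow> Pt v x"
proof -
  assume v: "v \<in> V" and x: "\<not> R x z"
  have a: "\<not> R (inv \<tau> x) ioo" using x itau_R1 by simp
  have vx: "\<not> R (v x) z" using V_notR[OF v] x by simp
  have w: "v \<circ> ga (inv \<tau> x) \<in> V" using V_comp[OF gamma_V[OF a] v] .
  have e: "v \<circ> ga (inv \<tau> x) = ga (inv \<tau> (v x))"
    using V_gamma[OF w] a tau_bij by simp
  have "conjset (M x) v = conjset U (v \<circ> ga (inv \<tau> x))"
    using M_ga[OF x] cs_comp[OF symeq_bij[OF gamma_sym[OF a]] V_bij[OF v]] by simp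
  also have "\<dots> = M (v x)" using e M_ga[OF vx] by simp
  finally show ?thesis by (simp add: Pt_def)
qed

lemma Pt_swap:
  assumes k: "k \<in> symeq R" and kz: "k z = ioo" and ki: "k ioo = z"
    and kU: "conjset U k = V" and kV: "conjset V k = U"
  shows "Pt k x"
proof -
  have b: "bij k" using symeq_bij[OF k] .
  have ik1: "inv k ioo = z" using kz b by (metis bij_inv_app)
  have ik2: "inv k z = ioo" using ki b by (metis bij_inv_app)
  show ?thesis
  proof (cases "R x ioo")
    case False
    have ba: "bij (al x)" using U_bij[OF alpha_U[OF False]] .
    define w where "w = k \<circ> al x \<circ> inv k"
    have "w \<in> conjset U k" unfolding w_def conjset_eq
      by (rule image_eqI[where x="al x"]) (simp_all add: alpha_U[OF False])
    then have w: "w \<in> V" using kU by simp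
    have wb: "bij w" using V_bij[OF w] .
    have wi: "w ioo = k x" using ik1 False by (simp add: w_def)
    have kx: "\<not> R (k x) z" using symeq_R[OF k, of x ioo] ki False by simp
    have "conjset (M x) k = conjset V (k \<circ> al x)"
      using False cs_comp[OF ba b] by (simp add: MU_def)
    also have "k \<circ> al x = w \<circ> k" using b by (simp add: w_def comp_assoc)
    also have "conjset V (w \<circ> k) = conjset U w" using cs_comp[OF b wb, symmetric] kV by simp
    also have "w = ga (inv \<tau> (k x))"
    proof -
      have "w = ga (inv \<tau> (w ioo))" by (rule conjunct2[OF V_gamma[OF w]])
      then show ?thesis unfolding wi .
    qed
    also have "conjset U (ga (inv \<tau> (k x))) = M (k x)" using M_ga[OF kx] by simp
    finally show ?thesis by (simp add: Pt_def)
  next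
    case True
    have a: "\<not> R (inv \<tau> x) ioo"
    proof
      assume "R (inv \<tau> x) ioo"
      then have "R x z" by (simp add: itau_R1)
      then have "R z x" by (rule Rsym)
      then have "R z ioo" using True by (rule Rtrans)
      then show False using z_not by simp
    qed
    have bg: "bij (ga (inv \<tau> x))" using symeq_bij[OF gamma_sym[OF a]] .
    define w where "w = k \<circ> ga (inv \<tau> x) \<circ> inv k"
    have "w \<in> conjset V k" unfolding w_def conjset_eq[of V k]
      by (rule image_eqI[where x="ga (inv \<tau> x)"]) (simp_all add: gamma_V[OF a])
    then have w: "w \<in> U" using kV by simp
    have wb: "bij w" using U_bij[OF w] .
    have wi: "w z = k x" using ik2 a tau_bij by (simp add: w_def)
    have "R (k x) z" using symeq_R[OF k, of x ioo] ki True by simp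
    have kx: "\<not> R (k x) ioo"
    proof
      assume "R (k x) ioo"
      then have "R ioo (k x)" by (rule Rsym)
      then have "R ioo z" using \<open>R (k x) z\<close> by (rule Rtrans)
      then show False using z_not' by simp
    qed
    have "conjset (M x) k = conjset U (k \<circ> ga (inv \<tau> x))"
      using True cs_comp[OF bg b] by (simp add: MU_def)
    also have "k \<circ> ga (inv \<tau> x) = w \<circ> k" using b by (simp add: w_def comp_assoc)
    also have "conjset U (w \<circ> k) = conjset V w" using cs_comp[OF b wb, symmetric] kU by simp
    also have "w = al (k x)" using alpha_uniq[OF w] wi by simp
    also have "conjset V (al (k x)) = M (k x)" using kx by (simp add: MU_def)
    finally show ?thesis by (simp add: Pt_def)
  qed
qed

lemma Vmu: "un y \<Longrightarrow> conjset V (mu' y) = U"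
proof -
  assume y: "un y"
  have "V = conjset U (mu' (ng y))" using H3 un_neg[OF y] by simp
  then show ?thesis using iffD2[OF Vmu_iff[OF y]] by blast
qed

lemma Pt_mu: "un y \<Longrightarrow> Pt (mu' y) x"
  by (rule Pt_swap[OF mu_sym mu_z mu_ioo H3[rule_format, symmetric] Vmu])

end
end


context cdl begin

lemma Rl: "R a b \<Longrightarrow> R a c = R b c"
proof -
  assume ab: "R a b"
  have ba: "R b a" using ab by (rule Rsym)
  show ?thesis
  proof
    assume "R a c" then show "R b c" using ba by (intro Rtrans[of b a c])
  next
    assume "R b c" then show "R a c" using ab by (intro Rtrans[of a b c])
  qed
qed

lemma Rr: "R a b \<Longrightarrow> R c a = R c b"
proof -
  assume ab: "R a b"
  have ba: "R b a" using ab by (rule Rsym)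
  show ?thesis
  proof
    assume "R c a" then show "R c b" using ab by (intro Rtrans[of c a b])
  next
    assume "R c b" then show "R c a" using ba by (intro Rtrans[of c b a])
  qed
qed

context
  assumes H3: "\<forall>x. un x \<longrightarrow> V = conjset U (mu' x)"
begin

lemma Pt_Vunit: "v \<in> V \<Longrightarrow> un (v ioo) \<Longrightarrow> Pt v x"
proof -
  assume v: "v \<in> V" and vu: "un (v ioo)"
  define c where "c = inv \<tau> (v ioo)"
  have cc: "\<not> R c ioo" and vc: "v = ga c" using V_gamma[OF v] c_def by auto
  have cz: "\<not> R c z" using vu by (simp add: c_def itau_R2 un_def')
  have tc: "\<not> R (\<tau> c) ioo" using cz tau_R1 by simp
  define y where "y = ng (\<tau> c)"
  have y: "un y" unfolding y_def un_def' using neg_notR[OF tc] neg_Rz[OF tc] tau_R2 cc by simp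
  note p = mu_parts[OF y]
  define b where "b = ng (inv \<tau> y)"
  have bb: "\<not> R b ioo" using p(1) b_def by simp
  have c2: "inv \<tau> (ng y) = c" using y_def tc tau_bij by simp
  have me: "mu' y = ga b \<circ> al y \<circ> ga c" using mu_eq c2 b_def by simp
  have b1: "bij (ga b)" using symeq_bij[OF gamma_sym[OF bb]] .
  have b2: "bij (al y)" using U_bij[OF alpha_U[OF p(4)]] .
  have ve: "v = inv (al y) \<circ> (inv (ga b) \<circ> mu' y)"
    unfolding me vc using b1 b2 by (simp add: comp_assoc)
  show ?thesis
  proof (cases "R x z")
    case False
    then show ?thesis using Pt_V[OF H3 v] by simp
  next
    case True
    have m1: "Pt (mu' y) x" using Pt_mu[OF H3 y] .
    have "R (mu' y x) ioo" using symeq_R[OF mu_sym[OF y], of x z] mu_z[OF y] True by simp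
    then have mx: "\<not> R (mu' y x) z"
      using Rl[of "mu' y x" ioo z] z_not' by simp
    have m2: "Pt (inv (ga b)) (mu' y x)" using Pt_V[OF H3 V_inv[OF gamma_V[OF bb]] mx] .
    have "\<not> R (inv (ga b) (mu' y x)) ioo"
    proof
      assume a: "R (inv (ga b) (mu' y x)) ioo"
      have "R (ga b (inv (ga b) (mu' y x))) (ga b ioo)" using a symeq_R[OF gamma_sym[OF bb]] by simp
      then have "R (mu' y x) (\<tau> b)" using b1 bb by simp
      then have "R ioo (\<tau> b)" using Rl[OF \<open>R (mu' y x) ioo\<close>] by simp
      then have "R (\<tau> b) ioo" by (rule Rsym)
      then have "R b z" using tau_R1 by simp
      then have "R (inv \<tau> y) z" using neg_Rz[OF p(3)] b_def by simp
      then show False using p(4) itau_R2 by simp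
    qed
    then have m3: "Pt (inv (al y)) (inv (ga b) (mu' y x))" using Pt_U[OF U_inv[OF alpha_U[OF p(4)]]] by simp
    have "Pt (inv (ga b) \<circ> mu' y) x"
      using Pt_comp[OF mu_bij[OF y] bij_imp_bij_inv[OF b1] m1 m2] .
    then have "Pt (inv (al y) \<circ> (inv (ga b) \<circ> mu' y)) x"
      using Pt_comp[OF bij_comp[OF mu_bij[OF y] bij_imp_bij_inv[OF b1]] bij_imp_bij_inv[OF b2]] m3 by simp
    then show ?thesis using ve by simp
  qed
qed

lemma Pt_Vall: "v \<in> V \<Longrightarrow> Pt v x"
proof -
  assume v: "v \<in> V"
  show ?thesis
  proof (cases "un (v ioo)")
    case True
    then show ?thesis using Pt_Vunit[OF v] by simp
  next
    case False
    have "\<not> R (v ioo) z" using V_notR[OF v, of ioo] z_not' by simp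
    then have vi: "R (v ioo) ioo" using False by (simp add: un_def')
    obtain y0 where y0: "un y0" using exists_unit by blast
    have a0: "\<not> R (inv \<tau> y0) ioo" using mu_parts(3)[OF y0] .
    define b0 where "b0 = ga (inv \<tau> y0)"
    have b0V: "b0 \<in> V" using gamma_V[OF a0] b0_def by simp
    have b0i: "b0 ioo = y0" using a0 tau_bij b0_def by simp
    have bb: "bij b0" using V_bij[OF b0V] .
    define w where "w = inv b0 \<circ> v"
    have wV: "w \<in> V" using V_comp[OF v V_inv[OF b0V]] w_def by simp
    have "un (w ioo)"
      unfolding un_def'
    proof
      show "\<not> R (w ioo) z"
      proof
        assume "R (w ioo) z"
        then have "R (b0 (w ioo)) (b0 z)" using V_R[OF b0V] by simp
        then have "R (v ioo) z" using bb V_fix[OF b0V] by (simp add: w_def)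
        then show False using \<open>\<not> R (v ioo) z\<close> by simp
      qed
      show "\<not> R (w ioo) ioo"
      proof
        assume "R (w ioo) ioo"
        then have "R (b0 (w ioo)) (b0 ioo)" using V_R[OF b0V] by simp
        then have "R (v ioo) y0" using bb b0i by (simp add: w_def)
        then have "R ioo y0" using Rl[OF vi] by simp
        then have "R y0 ioo" by (rule Rsym)
        then show False using y0 by (simp add: un_def')
      qed
    qed
    then have pw: "Pt w x" using Pt_Vunit[OF wV] by simp
    have pb: "Pt b0 (w x)" using Pt_Vunit[OF b0V] b0i y0 by simp
    have "Pt (b0 \<circ> w) x" using Pt_comp[OF V_bij[OF wV] bb pw pb] .
    moreover have "b0 \<circ> w = v" using bb by (simp add: w_def)
    ultimately show ?thesis by simp
  qed
qed

lemma Pt_Uall: "u \<in> U \<Longrightarrow> Pt u x"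
proof -
  assume u: "u \<in> U"
  obtain y0 where y0: "un y0" using exists_unit by blast
  define m where "m = mu' y0"
  have mb: "bij m" using mu_bij[OF y0] m_def by simp
  have "u \<in> conjset V m" using Vmu[OF H3 y0] u m_def by simp
  then obtain v where v: "v \<in> V" "u = m \<circ> v \<circ> inv m" by (auto simp: conjset_eq)
  have p1: "Pt (inv m) x" using Pt_inv[OF mb] Pt_mu[OF H3 y0] m_def by simp
  have p2: "Pt v (inv m x)" using Pt_Vall[OF v(1)] .
  have p3: "Pt m (v (inv m x))" using Pt_mu[OF H3 y0] m_def by simp
  have "Pt (v \<circ> inv m) x" using Pt_comp[OF bij_imp_bij_inv[OF mb] V_bij[OF v(1)] p1 p2] .
  then have "Pt (m \<circ> (v \<circ> inv m)) x"
    using Pt_comp[OF bij_comp[OF bij_imp_bij_inv[OF mb] V_bij[OF v(1)]] mb] p3 by simp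
  then show ?thesis using v(2) by (simp add: comp_assoc)
qed

definition PE where "PE g \<longleftrightarrow> g \<in> symeq R \<and> (\<forall>x. Pt g x)"

lemma PE_comp: "PE g \<Longrightarrow> PE h \<Longrightarrow> PE (h \<circ> g)"
  unfolding PE_def using Pt_comp symeq_comp symeq_bij by metis

lemma PE_inv: "PE g \<Longrightarrow> PE (inv g)"
  unfolding PE_def using Pt_inv symeq_inv symeq_bij by metis

lemma PE_U: "u \<in> U \<Longrightarrow> PE u" unfolding PE_def using U_sym Pt_Uall by blast
lemma PE_V: "v \<in> V \<Longrightarrow> PE v" unfolding PE_def using V_sym Pt_Vall by blast

lemma PE_conj: "PE k \<Longrightarrow> PE g \<Longrightarrow> PE (k \<circ> g \<circ> inv k)"
  using PE_comp PE_inv by metis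

lemma gen_PE: "g \<in> gen (\<Union>y. M y) \<Longrightarrow> PE g"
proof (induction rule: gen.induct)
  case (gen_base g)
  then obtain y where g: "g \<in> M y" by blast
  show ?case
  proof (cases "R y ioo")
    case True
    have a: "\<not> R (inv \<tau> y) ioo"
    proof
      assume "R (inv \<tau> y) ioo"
      then have "R y z" by (simp add: itau_R1)
      then have "R z y" by (rule Rsym)
      then have "R z ioo" using True by (rule Rtrans)
      then show False using z_not by simp
    qed
    from g True obtain u where u: "u \<in> U" "g = ga (inv \<tau> y) \<circ> u \<circ> inv (ga (inv \<tau> y))"
      by (auto simp: MU_def conjset_eq)
    show ?thesis unfolding u(2) by (rule PE_conj[OF PE_V[OF gamma_V[OF a]] PE_U[OF u(1)]])
  next
    case False
    from g False obtain v where v: "v \<in> V" "g = al y \<circ> v \<circ> inv (al y)"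
      by (auto simp: MU_def conjset_eq[of V])
    show ?thesis unfolding v(2) by (rule PE_conj[OF PE_U[OF alpha_U[OF False]] PE_V[OF v(1)]])
  qed
next
  case gen_id
  show ?case unfolding PE_def Pt_def by (simp add: symeq_id)
next
  case (gen_comp g h)
  then show ?case using PE_comp by blast
next
  case (gen_inv g)
  then show ?case using PE_inv by blast
qed

lemma LM2_holds: "LM2 R M"
  unfolding LM2_def using gen_PE by (simp add: PE_def Pt_def)

end

lemma LM2_iii: "LM2 R M \<Longrightarrow> un x \<Longrightarrow> V = conjset U (mu' x)"
proof -
  assume L: "LM2 R M" and x: "un x"
  note p = mu_parts[OF x]
  have "ga (ng (inv \<tau> x)) \<in> gen (\<Union>y. M y)" using gamma_V[OF p(1)] M_z by (auto intro: gen_base)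
  moreover have "al x \<in> gen (\<Union>y. M y)" using alpha_U[OF p(4)] M_ioo by (auto intro: gen_base)
  moreover have "ga (inv \<tau> (ng x)) \<in> gen (\<Union>y. M y)" using gamma_V[OF p(2)] M_z by (auto intro: gen_base)
  ultimately have "mu' x \<in> gen (\<Union>y. M y)" unfolding mu_eq by (intro gen_comp)
  then have "conjset (M ioo) (mu' x) = M (mu' x ioo)" using L by (simp add: LM2_def)
  then show ?thesis using M_ioo M_z mu_ioo[OF x] by simp
qed

lemma main: "LM0 R M \<and> LM1 R M \<and> LM1' R M \<and>
    (local_moufang R M \<longleftrightarrow> (\<forall>x. un x \<longrightarrow> conjset U (hh U ioo \<tau> x) = U)) \<and>
    ((\<forall>x. un x \<longrightarrow> conjset U (hh U ioo \<tau> x) = U) \<longleftrightarrow> (\<forall>x. un x \<longrightarrow> V = conjset U (mu' x)))"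
proof -
  have a: "local_moufang R M \<longleftrightarrow> (\<forall>x. un x \<longrightarrow> V = conjset U (mu' x))"
  proof
    assume "local_moufang R M"
    then have "LM2 R M" by (simp add: local_moufang_def)
    then show "\<forall>x. un x \<longrightarrow> V = conjset U (mu' x)" using LM2_iii by blast
  next
    assume H: "\<forall>x. un x \<longrightarrow> V = conjset U (mu' x)"
    show "local_moufang R M" unfolding local_moufang_def
      using eqv mt2 M_sub LM0_holds LM1_holds LM1'_holds LM2_holds[OF H] by blast
  qed
  show ?thesis using a ii_iii LM0_holds LM1_holds LM1'_holds by blast
qed

end

theorem mainTheorem7:
  fixes R :: "'a \<Rightarrow> 'a \<Rightarrow> bool" and U :: "('a \<Rightarrow> 'a) set"
    and ioo :: 'a and \<tau> :: "'a \<Rightarrow> 'a"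
  assumes "construction_data R U ioo \<tau>"
  shows "LM0 R (MU R U ioo \<tau>) \<and> LM1 R (MU R U ioo \<tau>) \<and> LM1' R (MU R U ioo \<tau>) \<and>
    (local_moufang R (MU R U ioo \<tau>) \<longleftrightarrow>
       (\<forall>x. is_unit R ioo \<tau> x \<longrightarrow> conjset U (hh U ioo \<tau> x) = U)) \<and>
    ((\<forall>x. is_unit R ioo \<tau> x \<longrightarrow> conjset U (hh U ioo \<tau> x) = U) \<longleftrightarrow>
       (\<forall>x. is_unit R ioo \<tau> x \<longrightarrow> conjset U \<tau> = conjset U (mu U ioo \<tau> x)))"
proof -
  interpret cdl R U ioo \<tau> by unfold_locales (rule assms)
  show ?thesis using main by simp
qed

end
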